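(* For $\theta>0$ let $\Phi(1,\theta+1,\theta)=\sum_{n\ge0}\theta^n/(\theta+1)_n$ and let $\varphi_\theta$ be the probability on $D=\{1,2,\dots\}$ given by $$\varphi_\theta(d)=\frac{1}{\Phi(1,\theta+1,\theta)-1}\cdot\frac{\theta^d}{(\theta+1)_d}\qquad(d\in D).$$ Let $\tilde d_1,\tilde d_2,\dots$ be the coordinate maps on $D^\infty$, $\bar d^{(n)}=\frac1n\sum_{k=1}^n\tilde d_k$, let $\theta_0>0$, and let $$D_0=\Big\{(d_1,d_2,\dots)\in D^\infty:\exists n_0\text{ such that }\tfrac1n\textstyle\sum_{k=1}^n d_k>1\text{ for every }n\ge n_0\Big\}.$$ Then $\varphi_{\theta_0}^\infty(D_0)=1$, where $\varphi^\infty_{\theta_0}$ is the product measure. Moreover, for each point of $D_0$ and each $n\ge n_0$, the equation $$\Phi(1,\theta+1,\theta)=1+\frac{\theta}{\bar d^{(n)}}$$ has a unique solution $\theta>0$.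
   Context: $(a)_n$ denotes the rising factorial $a(a+1)\cdots(a+n-1)$, $(a)_0=1$. *)

theory Defs
  imports "HOL-Probability.Probability"
begin

definition Phi :: "real \<Rightarrow> real" where
  "Phi \<theta> = (\<Sum>n. \<theta> ^ n / pochhammer (\<theta> + 1) n)"

definition phi :: "real \<Rightarrow> nat \<Rightarrow> real" where
  "phi \<theta> d = (if d \<ge> 1 then (1 / (Phi \<theta> - 1)) * (\<theta> ^ d / pochhammer (\<theta> + 1) d) else 0)"

definition phi_measure :: "real \<Rightarrow> nat measure" where
  "phi_measure \<theta> = density (count_space UNIV) (\<lambda>d. ennreal (phi \<theta> d))"

text \<open>Infinite product measure phi_theta^infinity; coordinate k (k = 0,1,...)
  corresponds to the paper's coordinate d_{k+1}.\<close>
definition phi_inf :: "real \<Rightarrow> (nat \<Rightarrow> nat) measure" where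
  "phi_inf \<theta> = PiM UNIV (\<lambda>_. phi_measure \<theta>)"

definition dbar :: "nat \<Rightarrow> (nat \<Rightarrow> nat) \<Rightarrow> real" where
  "dbar n \<omega> = (\<Sum>k<n. real (\<omega> k)) / real n"

definition D0 :: "(nat \<Rightarrow> nat) set" where
  "D0 = {\<omega>. (\<forall>k. \<omega> k \<ge> 1) \<and> (\<exists>n0\<ge>1. \<forall>n\<ge>n0. dbar n \<omega> > 1)}"

end

theory Submission
  imports Defs
begin


definition u :: "real \<Rightarrow> nat \<Rightarrow> real" where
  "u \<theta> n = \<theta> ^ n / pochhammer (\<theta> + 1) n"

lemma poch_pos: "x > 0 \<Longrightarrow> pochhammer (x::real) n > 0"
  by (rule pochhammer_pos)

lemma pow_le_poch: "(x::real) > 0 \<Longrightarrow> x ^ n \<le> pochhammer x n"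
proof (induction n)
  case 0 then show ?case by simp
next
  case (Suc n)
  have "x ^ Suc n = x ^ n * x" by simp
  also have "\<dots> \<le> pochhammer x n * (x + of_nat n)"
    using Suc pochhammer_nonneg[of x n] by (intro mult_mono) auto
  finally show ?case by (simp add: pochhammer_Suc)
qed

lemma fact_le_poch: "(\<theta>::real) \<ge> 0 \<Longrightarrow> fact n \<le> pochhammer (\<theta> + 1) n"
proof (induction n)
  case 0 then show ?case by simp
next
  case (Suc n)
  have "fact (Suc n) = (fact n :: real) * (1 + of_nat n)" by (simp add: algebra_simps)
  also have "\<dots> \<le> pochhammer (\<theta>+1) n * (\<theta> + 1 + of_nat n)"
    using Suc pochhammer_nonneg[of "\<theta>+1" n] by (intro mult_mono) auto
  finally show ?case by (simp add: pochhammer_Suc)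
qed

lemma u_pos: "\<theta> > 0 \<Longrightarrow> u \<theta> n > 0"
  unfolding u_def by (intro divide_pos_pos zero_less_power poch_pos) auto

lemma u_0[simp]: "u \<theta> 0 = 1" by (simp add: u_def)

lemma u_le_exp: "\<theta> > 0 \<Longrightarrow> u \<theta> n \<le> \<theta> ^ n / fact n"
  unfolding u_def using fact_le_poch[of \<theta> n] poch_pos[of "\<theta>+1" n]
  by (intro divide_left_mono) (auto intro!: mult_pos_pos)

lemma u_le1: "\<theta> > 0 \<Longrightarrow> u \<theta> n \<le> 1"
  unfolding u_def using pow_le_poch[of "\<theta>+1" n] power_mono[of \<theta> "\<theta>+1" n] poch_pos[of "\<theta>+1" n]
  by (simp add: divide_le_eq)

lemma summable_u: "\<theta> > 0 \<Longrightarrow> summable (u \<theta>)"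
proof (rule summable_comparison_test)
  assume "\<theta> > 0"
  show "\<exists>N. \<forall>n\<ge>N. norm (u \<theta> n) \<le> inverse (fact n) * \<theta> ^ n"
    using u_le_exp[OF \<open>\<theta>>0\<close>] u_pos[OF \<open>\<theta>>0\<close>] by (auto simp: field_simps less_imp_le)
  show "summable (\<lambda>n. inverse (fact n) * \<theta> ^ n)" by (rule summable_exp)
qed

lemma u_Suc: "\<theta> > 0 \<Longrightarrow> u \<theta> (Suc n) * (\<theta> + 1 + of_nat n) = \<theta> * u \<theta> n"
proof -
  assume t: "\<theta> > 0"
  have p: "pochhammer (\<theta>+1) n > 0" using poch_pos[of "\<theta>+1" n] t by simp
  have "u \<theta> (Suc n) * (\<theta> + 1 + of_nat n) = \<theta> ^ Suc n / (pochhammer (\<theta> + 1) n * (\<theta> + 1 + of_nat n)) * (\<theta> + 1 + of_nat n)"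
    by (simp add: u_def pochhammer_Suc)
  also have "\<dots> = \<theta> ^ Suc n / pochhammer (\<theta> + 1) n"
  proof -
    have c: "\<theta> + 1 + of_nat n \<noteq> 0" using t by (simp add: add_pos_nonneg)
    show ?thesis using p c by (simp add: divide_simps del: power_Suc)
  qed
  also have "\<dots> = \<theta> * u \<theta> n" by (simp add: u_def)
  finally show ?thesis .
qed

lemma u_Suc': "\<theta> > 0 \<Longrightarrow> of_nat (Suc n) * u \<theta> (Suc n) = \<theta> * u \<theta> n - \<theta> * u \<theta> (Suc n)"
  using u_Suc[of \<theta> n] by (simp add: algebra_simps)

lemma u_shift: "\<theta> > 0 \<Longrightarrow> u \<theta> (j + i) = u \<theta> j * (\<theta> ^ i / pochhammer (\<theta> + 1 + of_nat j) i)"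
  unfolding u_def using pochhammer_product'[of "\<theta>+1" j i] 
  by (simp add: power_add)

lemma u_lim: "\<theta> > 0 \<Longrightarrow> u \<theta> \<longlonglongrightarrow> 0"
  using summable_LIMSEQ_zero[OF summable_u] .

lemma tail_sums: assumes "\<theta> > 0"
  shows "(\<lambda>i. real (j + 1 + i) * u \<theta> (j + 1 + i)) sums (\<theta> * u \<theta> j)"
proof -
  have l: "(\<lambda>i. - \<theta> * u \<theta> (j + i)) \<longlonglongrightarrow> - \<theta> * 0"
    using LIMSEQ_ignore_initial_segment[OF u_lim[OF assms], of j]
    by (intro tendsto_intros) (simp add: add.commute)
  have "(\<lambda>i. (- \<theta> * u \<theta> (j + Suc i)) - (- \<theta> * u \<theta> (j + i))) sums (- \<theta> * 0 - (- \<theta> * u \<theta> (j + 0)))"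
    by (rule telescope_sums[OF l])
  moreover have "(- \<theta> * u \<theta> (j + Suc i)) - (- \<theta> * u \<theta> (j + i)) = real (j + 1 + i) * u \<theta> (j + 1 + i)" for i
    using u_Suc'[OF assms, of "j+i"] by simp
  ultimately show ?thesis by simp
qed


definition V :: "real \<Rightarrow> nat \<Rightarrow> real" where
  "V \<theta> j = (\<Sum>i. u \<theta> (j + i))"

lemma summable_u_shift: "\<theta> > 0 \<Longrightarrow> summable (\<lambda>i. u \<theta> (j + i))"
  using summable_ignore_initial_segment[OF summable_u, of \<theta> j] by (simp add: add.commute)

lemma V_split: assumes "\<theta> > 0" shows "V \<theta> j = u \<theta> j + V \<theta> (Suc j)"
  using suminf_split_head[OF summable_u_shift[OF assms, of j]] unfolding V_def by simp

lemma V_nonneg: "\<theta> > 0 \<Longrightarrow> V \<theta> j \<ge> 0"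
  unfolding V_def using u_pos by (intro suminf_nonneg summable_u_shift) (auto intro: less_imp_le)

lemma NV_bound: assumes t: "\<theta> > 0" shows "real N * V \<theta> (Suc N) \<le> \<theta> * u \<theta> N"
proof -
  have "real N * V \<theta> (Suc N) = (\<Sum>i. real N * u \<theta> (Suc N + i))"
    unfolding V_def by (rule suminf_mult[symmetric, OF summable_u_shift[OF t]])
  also have "\<dots> \<le> (\<Sum>i. real (N + 1 + i) * u \<theta> (N + 1 + i))"
    using u_pos[OF t] summable_mult[OF summable_u_shift[OF t], of "real N" "Suc N"] sums_summable[OF tail_sums[OF t, of N]]
    by (intro suminf_le) (auto intro!: mult_right_mono less_imp_le)
  also have "\<dots> = \<theta> * u \<theta> N" using tail_sums[OF t, of N] by (simp add: sums_iff)
  finally show ?thesis .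
qed

lemma partial_V: assumes t: "\<theta> > 0"
  shows "(\<Sum>j<N. V \<theta> (Suc j)) = \<theta> * (1 - u \<theta> N) + real N * V \<theta> (Suc N)"
proof (induction N)
  case 0 then show ?case by simp
next
  case (Suc N)
  have "(\<Sum>j<Suc N. V \<theta> (Suc j)) = \<theta> * (1 - u \<theta> N) + real N * V \<theta> (Suc N) + V \<theta> (Suc N)"
    using Suc by simp
  also have "\<dots> = \<theta> * (1 - u \<theta> N) + real (Suc N) * (u \<theta> (Suc N) + V \<theta> (Suc (Suc N)))"
    using V_split[OF t, of "Suc N"] by (simp add: algebra_simps)
  also have "\<dots> = \<theta> * (1 - u \<theta> (Suc N)) + real (Suc N) * V \<theta> (Suc (Suc N))"
    using u_Suc'[OF t, of N] by (simp only: distrib_left) (simp add: algebra_simps)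
  finally show ?case .
qed

lemma V_sums: assumes t: "\<theta> > 0" shows "(\<lambda>j. V \<theta> (Suc j)) sums \<theta>"
  unfolding sums_def
proof (rule tendsto_sandwich[of "\<lambda>N. \<theta> * (1 - u \<theta> N)" _ _ "\<lambda>N. \<theta>"])
  show "\<forall>\<^sub>F n in sequentially. \<theta> * (1 - u \<theta> n) \<le> (\<Sum>j<n. V \<theta> (Suc j))"
    using partial_V[OF t] V_nonneg[OF t] by (auto intro!: always_eventually)
  show "\<forall>\<^sub>F n in sequentially. (\<Sum>j<n. V \<theta> (Suc j)) \<le> \<theta>"
  proof (intro always_eventually allI)
    fix n
    show "(\<Sum>j<n. V \<theta> (Suc j)) \<le> \<theta>"
      using partial_V[OF t, of n] NV_bound[OF t, of n] by (simp add: algebra_simps)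
  qed
  show "(\<lambda>N. \<theta> * (1 - u \<theta> N)) \<longlonglongrightarrow> \<theta>"
    using tendsto_mult[OF tendsto_const[of \<theta>] tendsto_diff[OF tendsto_const[of 1] u_lim[OF t]]] by simp
qed simp

lemma Phi_V: assumes t: "\<theta> > 0" shows "Phi \<theta> = 1 + V \<theta> 1"
proof -
  have "Phi \<theta> = suminf (u \<theta>)" by (simp add: Phi_def u_def[abs_def])
  also have "\<dots> = u \<theta> 0 + V \<theta> (Suc 0)" using V_split[OF t, of 0] by (simp add: V_def)
  finally show ?thesis by simp
qed


lemma frac_alt: assumes "(a::real) + c > 0" shows "a / (a + c) = 1 - c / (a + c)"
proof -
  have "1 - c / (a + c) = (a + c) / (a + c) - c / (a + c)" using assms by simp
  also have "\<dots> = (a + c - c) / (a + c)" by (rule diff_divide_distrib[symmetric])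
  also have "\<dots> = a / (a + c)" by simp
  finally show ?thesis by (rule sym)
qed

lemma frac_mono: assumes "0 < a" "a \<le> b" "(c::real) > 0" shows "a / (a + c) \<le> b / (b + c)"
proof -
  have "c / (b + c) \<le> c / (a + c)" using assms by (intro divide_left_mono) auto
  then show ?thesis using assms frac_alt[of a c] frac_alt[of b c] by simp
qed

lemma frac_smono: assumes "0 < a" "a < b" "(c::real) > 0" shows "a / (a + c) < b / (b + c)"
proof -
  have "c / (b + c) < c / (a + c)" using assms by (intro divide_strict_left_mono) auto
  then show ?thesis using assms frac_alt[of a c] frac_alt[of b c] by simp
qed

definition w :: "real \<Rightarrow> real \<Rightarrow> nat \<Rightarrow> real" where
  "w \<theta> c k = \<theta> ^ k / pochhammer (\<theta> + c) k"

lemma w_Suc: assumes "\<theta> > 0" "c > 0" shows "w \<theta> c (Suc k) = w \<theta> c k * (\<theta> / (\<theta> + (c + of_nat k)))"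
proof -
  have p: "pochhammer (\<theta>+c) k > 0" using assms pochhammer_pos[of "\<theta>+c" k] by simp
  have q: "\<theta> + (c + of_nat k) > 0" using assms by (simp add: add_pos_nonneg)
  have "w \<theta> c (Suc k) = (\<theta> ^ k * \<theta>) / (pochhammer (\<theta>+c) k * (\<theta> + (c + of_nat k)))"
    by (simp add: w_def pochhammer_Suc add.assoc mult.commute)
  also have "\<dots> = w \<theta> c k * (\<theta> / (\<theta> + (c + of_nat k)))"
    by (simp add: w_def)
  finally show ?thesis .
qed

lemma w_pos: assumes "\<theta> > 0" "c > 0" shows "w \<theta> c k > 0"
  using assms pochhammer_pos[of "\<theta>+c" k] by (simp add: w_def)

lemma w_mono: assumes "0 < a" "a \<le> b" "c > 0" shows "w a c k \<le> w b c k"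
proof (induction k)
  case 0 then show ?case by (simp add: w_def)
next
  case (Suc k)
  have b: "0 < b" using assms by simp
  have "w a c k * (a / (a + (c + of_nat k))) \<le> w b c k * (b / (b + (c + of_nat k)))"
    using assms w_pos[OF assms(1,3), of k] w_pos[OF b assms(3), of k]
    by (intro mult_mono Suc frac_mono) auto
  then show ?case unfolding w_Suc[OF assms(1,3)] w_Suc[OF b assms(3)] .
qed

lemma w_smono: assumes "0 < a" "a < b" "c > 0" shows "w a c (Suc k) < w b c (Suc k)"
proof -
  have b: "0 < b" using assms by simp
  have "w a c k \<le> w b c k" using assms by (intro w_mono) auto
  moreover have "a / (a + (c + of_nat k)) < b / (b + (c + of_nat k))"
    using assms by (intro frac_smono) auto
  moreover have "0 < a / (a + (c + of_nat k))" using assms by (simp add: add_pos_nonneg)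
  ultimately have "w a c k * (a / (a + (c + of_nat k))) < w b c k * (b / (b + (c + of_nat k)))"
    using w_pos[OF assms(1,3), of k] w_pos[OF b assms(3), of k]
    by (intro mult_le_less_imp_less) auto
  then show ?thesis unfolding w_Suc[OF assms(1,3)] w_Suc[OF b assms(3)] .
qed

lemma u_shift_w: "\<theta> > 0 \<Longrightarrow> u \<theta> (d + k) = u \<theta> d * w \<theta> (1 + of_nat d) k"
  using u_shift[of \<theta> d k] by (simp add: w_def add.assoc)

lemma MLR: assumes "0 < a" "a \<le> b" "d \<le> e"
  shows "u a e * u b d \<le> u b e * u a d"
proof -
  define k where "k = e - d"
  have e: "e = d + k" using assms(3) by (simp add: k_def)
  have b: "0 < b" using assms by simp
  have ua: "u a e = u a d * w a (1 + of_nat d) k" unfolding e by (rule u_shift_w[OF assms(1)])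
  have ub: "u b e = u b d * w b (1 + of_nat d) k" unfolding e by (rule u_shift_w[OF b])
  have "(u a d * u b d) * w a (1 + of_nat d) k \<le> (u a d * u b d) * w b (1 + of_nat d) k"
  proof -
    have W: "w a (1 + of_nat d) k \<le> w b (1 + of_nat d) k" using w_mono[OF assms(1,2), of "1 + of_nat d" k] by simp
    have P: "0 < u a d * u b d" using u_pos[OF assms(1), of d] u_pos[OF b, of d] by simp
    show ?thesis using mult_left_mono[OF W less_imp_le[OF P]] .
  qed
  then show ?thesis unfolding ua ub by (simp only: ac_simps)
qed

lemma MLR_strict: assumes "0 < a" "a < b" "d < e"
  shows "u a e * u b d < u b e * u a d"
proof -
  define k where "k = e - d - 1"
  have e: "e = d + Suc k" using assms(3) by (simp add: k_def)
  have b: "0 < b" using assms by simp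
  have ua: "u a e = u a d * w a (1 + of_nat d) (Suc k)" unfolding e by (rule u_shift_w[OF assms(1)])
  have ub: "u b e = u b d * w b (1 + of_nat d) (Suc k)" unfolding e by (rule u_shift_w[OF b])
  have "(u a d * u b d) * w a (1 + of_nat d) (Suc k) < (u a d * u b d) * w b (1 + of_nat d) (Suc k)"
  proof -
    have W: "w a (1 + of_nat d) (Suc k) < w b (1 + of_nat d) (Suc k)" using w_smono[OF assms(1,2), of "1 + of_nat d" k] by simp
    have P: "0 < u a d * u b d" using u_pos[OF assms(1), of d] u_pos[OF b, of d] by simp
    show ?thesis using mult_strict_left_mono[OF W P] .
  qed
  then show ?thesis unfolding ua ub by (simp only: ac_simps)
qed


definition A :: "real \<Rightarrow> nat \<Rightarrow> real" where
  "A \<theta> m = (\<Sum>i<m. u \<theta> (1 + i))"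

lemma V1_split: assumes t: "\<theta> > 0" shows "V \<theta> 1 = A \<theta> m + V \<theta> (1 + m)"
proof -
  have s: "summable (\<lambda>i. u \<theta> (1 + i))" by (rule summable_u_shift[OF t])
  have "V \<theta> 1 = (\<Sum>n. u \<theta> (1 + (n + m))) + (\<Sum>i<m. u \<theta> (1 + i))"
    unfolding V_def using suminf_split_initial_segment[OF s, of m] by simp
  also have "(\<Sum>n. u \<theta> (1 + (n + m))) = V \<theta> (1 + m)"
    unfolding V_def by (simp add: ac_simps)
  finally show ?thesis by (simp add: A_def)
qed

lemma V_pos: assumes t: "\<theta> > 0" shows "V \<theta> j > 0"
  using V_split[OF t, of j] V_nonneg[OF t, of "Suc j"] u_pos[OF t, of j] by simp

lemma suminf_strict:
  fixes f g :: "nat \<Rightarrow> real"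
  assumes "summable f" "summable g" "\<And>n. f n \<le> g n" "f i < g i"
  shows "suminf f < suminf g"
proof -
  have "0 < (\<Sum>n. g n - f n)"
    using assms by (intro suminf_pos2[of _ i] summable_diff) auto
  also have "\<dots> = suminf g - suminf f" using suminf_diff[OF assms(2,1)] by simp
  finally show ?thesis by simp
qed

lemma cross_term: assumes "0 < a" "a \<le> b" "i < m"
  shows "V a (1 + m) * u b (1 + i) \<le> V b (1 + m) * u a (1 + i)"
proof -
  have b: "0 < b" using assms by simp
  have "V a (1 + m) * u b (1 + i) = (\<Sum>n. u a (1 + m + n) * u b (1 + i))"
    unfolding V_def by (rule suminf_mult2[OF summable_u_shift[OF assms(1)]])
  also have "\<dots> \<le> (\<Sum>n. u b (1 + m + n) * u a (1 + i))"
    using assms by (intro suminf_le MLR summable_mult2 summable_u_shift b) auto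
  also have "\<dots> = V b (1 + m) * u a (1 + i)"
    unfolding V_def by (rule suminf_mult2[symmetric, OF summable_u_shift[OF b]])
  finally show ?thesis .
qed

lemma cross_term_strict: assumes "0 < a" "a < b"
  shows "V a 2 * u b 1 < V b 2 * u a 1"
proof -
  have b: "0 < b" using assms by simp
  have "V a 2 * u b 1 = (\<Sum>n. u a (2 + n) * u b 1)"
    unfolding V_def by (rule suminf_mult2[OF summable_u_shift[OF assms(1)]])
  also have "\<dots> < (\<Sum>n. u b (2 + n) * u a 1)"
  proof (rule suminf_strict[where i=0])
    show "summable (\<lambda>n. u a (2 + n) * u b 1)" by (intro summable_mult2 summable_u_shift assms)
    show "summable (\<lambda>n. u b (2 + n) * u a 1)" by (intro summable_mult2 summable_u_shift b)
    show "u a (2 + n) * u b 1 \<le> u b (2 + n) * u a 1" for n using assms by (intro MLR) auto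
    show "u a (2 + 0) * u b 1 < u b (2 + 0) * u a 1" using assms by (intro MLR_strict) auto
  qed
  also have "\<dots> = V b 2 * u a 1"
    unfolding V_def by (rule suminf_mult2[symmetric, OF summable_u_shift[OF b]])
  finally show ?thesis .
qed

lemma cross: assumes "0 < a" "a \<le> b"
  shows "V a (1 + m) * A b m \<le> V b (1 + m) * A a m"
  unfolding A_def sum_distrib_left using assms by (intro sum_mono cross_term) auto

definition tl_ratio :: "real \<Rightarrow> nat \<Rightarrow> real" where
  "tl_ratio \<theta> j = V \<theta> (Suc j) / V \<theta> 1"

lemma ratio_le: assumes "(y::real) > 0" "q > 0" "x * q \<le> z * y" shows "x / y \<le> z / q"
  using assms by (simp add: divide_simps mult.commute)

lemma ratio_less: assumes "(y::real) > 0" "q > 0" "x * q < z * y" shows "x / y < z / q"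
  using assms by (simp add: divide_simps mult.commute)

lemma tl_mono: assumes "0 < a" "a \<le> b" shows "tl_ratio a j \<le> tl_ratio b j"
proof -
  have b: "0 < b" using assms by simp
  have "V a (1 + j) * (A b j + V b (1 + j)) \<le> V b (1 + j) * (A a j + V a (1 + j))"
    using cross[OF assms, of j] by (simp add: algebra_simps)
  then show ?thesis unfolding tl_ratio_def using V1_split[OF assms(1), of j] V1_split[OF b, of j]
    by (intro ratio_le V_pos assms(1) b) simp
qed

lemma tl_smono: assumes "0 < a" "a < b" shows "tl_ratio a 1 < tl_ratio b 1"
proof -
  have b: "0 < b" using assms by simp
  have "V a 2 * (A b 1 + V b 2) < V b 2 * (A a 1 + V a 2)"
    using cross_term_strict[OF assms] by (simp add: algebra_simps A_def)
  then show ?thesis unfolding tl_ratio_def using V1_split[OF assms(1), of 1] V1_split[OF b, of 1]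
    by (intro ratio_less V_pos assms(1) b) (simp add: numeral_2_eq_2)
qed

lemma tl_sums: assumes "\<theta> > 0" shows "tl_ratio \<theta> sums (\<theta> / V \<theta> 1)"
  unfolding tl_ratio_def[abs_def] by (rule sums_divide[OF V_sums[OF assms]])

lemma mean_smono: assumes "0 < a" "a < b" shows "a / V a 1 < b / V b 1"
proof -
  have b: "0 < b" using assms by simp
  have "a / V a 1 = suminf (tl_ratio a)" using tl_sums[OF assms(1)] by (simp add: sums_iff)
  also have "\<dots> < suminf (tl_ratio b)"
    using tl_sums[OF assms(1)] tl_sums[OF b] tl_mono[OF assms(1) less_imp_le[OF assms(2)]] tl_smono[OF assms]
    by (intro suminf_strict[where i=1]) (auto simp: sums_iff)
  also have "\<dots> = b / V b 1" using tl_sums[OF b] by (simp add: sums_iff)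
  finally show ?thesis .
qed


lemma u_cont: assumes "0 < a" shows "continuous_on {a..b} (\<lambda>\<theta>. u \<theta> n)"
proof -
  have eq: "u \<theta> n = \<theta> ^ n / (\<Prod>i<n. \<theta> + 1 + of_nat i)" for \<theta>
    unfolding u_def pochhammer_prod by (simp add: atLeast0LessThan)
  show ?thesis unfolding eq using assms
    by (intro continuous_intros) (auto simp: prod_zero_iff add_pos_nonneg)
qed

lemma Phi_cont: assumes "0 < a" shows "continuous_on {a..b} Phi"
proof -
  have ul: "uniform_limit {a..b} (\<lambda>n x. \<Sum>i<n. u x i) (\<lambda>x. suminf (\<lambda>i. u x i)) sequentially"
  proof (rule Weierstrass_m_test)
    show "summable (\<lambda>n. b ^ n / fact n)" using summable_exp[of b] by (simp add: field_simps)
    fix n x assume x: "x \<in> {a..b}"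
    then have "x > 0" using assms by simp
    then have "norm (u x n) = u x n" using u_pos[of x n] by simp
    also have "\<dots> \<le> x ^ n / fact n" by (rule u_le_exp[OF \<open>x>0\<close>])
    also have "\<dots> \<le> b ^ n / fact n" using x \<open>x>0\<close> by (intro divide_right_mono power_mono) auto
    finally show "norm (u x n) \<le> b ^ n / fact n" .
  qed
  have eqPhi: "Phi = (\<lambda>x. suminf (\<lambda>i. u x i))" by (rule ext) (simp add: Phi_def u_def)
  show ?thesis unfolding eqPhi
    by (rule uniform_limit_theorem[OF _ ul]) (auto intro!: always_eventually continuous_on_sum u_cont assms)
qed

lemma u_1: "u \<theta> 1 = \<theta> / (\<theta> + 1)" by (simp add: u_def)

lemma V_lower: assumes "\<theta> > 0" shows "\<theta> / V \<theta> 1 \<le> \<theta> + 1"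
proof -
  have "u \<theta> 1 \<le> V \<theta> 1" using V_split[OF assms, of 1] V_nonneg[OF assms, of 2] by (simp add: numeral_2_eq_2)
  moreover have "u \<theta> 1 > 0" by (rule u_pos[OF assms])
  ultimately have "\<theta> / V \<theta> 1 \<le> \<theta> / u \<theta> 1" using assms by (intro divide_left_mono) auto
  also have "\<dots> = \<theta> + 1" unfolding u_1 using assms by simp
  finally show ?thesis .
qed

lemma w_geom: assumes "\<theta> > 0" "(K::nat) \<ge> 1" shows "w \<theta> (1 + of_nat K) i \<le> (\<theta> / (\<theta> + K)) ^ i"
proof -
  have "(\<theta> + K) ^ i \<le> (\<theta> + (1 + K)) ^ i" using assms by (intro power_mono) auto
  also have "\<dots> \<le> pochhammer (\<theta> + (1 + K)) i" using assms by (intro pow_le_poch) auto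
  finally have p1: "(\<theta> + K) ^ i \<le> pochhammer (\<theta> + (1 + K)) i" .
  have pos: "0 < (\<theta> + K) ^ i" using assms by simp
  have pos2: "0 < pochhammer (\<theta> + (1 + K)) i" using assms by (intro pochhammer_pos) auto
  have "\<theta> ^ i / pochhammer (\<theta> + (1 + K)) i \<le> \<theta> ^ i / (\<theta> + K) ^ i"
    using assms pos pos2 by (intro divide_left_mono[OF p1]) auto
  then show ?thesis by (simp add: w_def power_divide)
qed

lemma V_upper: assumes "(K::nat) \<ge> 1" shows "V (real K ^ 2) 1 \<le> 2 * real K"
proof -
  define b where "b = real K ^ 2"
  have b: "b > 0" using assms by (simp add: b_def)
  have K1: "1 + (K - 1) = K" using assms by simp
  have "V b 1 = A b (K - 1) + V b K" using V1_split[OF b, of "K - 1"] K1 by simp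
  also have "A b (K - 1) \<le> real (K - 1)"
    unfolding A_def using sum_mono[of "{..<K-1}" "\<lambda>i. u b (1 + i)" "\<lambda>_. 1"] u_le1[OF b] by simp
  also have "V b K \<le> real K + 1"
  proof -
    define r where "r = b / (b + K)"
    have r: "0 \<le> r" "r < 1" using b assms by (auto simp: r_def)
    have "V b K = (\<Sum>i. u b K * w b (1 + of_nat K) i)" unfolding V_def using u_shift_w[OF b] by simp
    also have "\<dots> \<le> (\<Sum>i. r ^ i)"
    proof (rule suminf_le)
      show "summable (\<lambda>i. u b K * w b (1 + of_nat K) i)"
        using summable_u_shift[OF b, of K] u_shift_w[OF b] by simp
      show "summable (\<lambda>i. r ^ i)" using r by (intro summable_geometric) auto
      fix i
      have "u b K * w b (1 + of_nat K) i \<le> 1 * r ^ i"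
        using u_le1[OF b, of K] w_geom[OF b assms, of i] w_pos[OF b, of "1 + of_nat K" i] u_pos[OF b, of K] r
        unfolding r_def by (intro mult_mono) auto
      then show "u b K * w b (1 + of_nat K) i \<le> r ^ i" by simp
    qed
    also have "\<dots> = 1 / (1 - r)" using r by (intro suminf_geometric) auto
    also have "\<dots> = real K + 1"
    proof -
      have h: "1 - r = K / (b + K)" using b unfolding r_def by (simp add: field_simps)
      have Kn: "real K \<noteq> 0" using assms by simp
      have "1 / (1 - r) = (b + K) / K" unfolding h by simp
      also have "\<dots> = real K + 1" using Kn by (simp add: b_def power2_eq_square field_simps)
      finally show ?thesis .
    qed
    finally show ?thesis .
  qed
  finally have "V b 1 \<le> real (K - 1) + (real K + 1)" by simp
  then show ?thesis using assms by (simp add: b_def of_nat_diff)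
qed

lemma exists_sol: assumes "M > (1::real)" shows "\<exists>\<theta>>0. \<theta> / V \<theta> 1 = M"
proof -
  define a where "a = (M - 1) / 2"
  define K where "K = nat \<lceil>2 * M\<rceil> + 1"
  define b where "b = real K ^ 2"
  have a: "a > 0" using assms by (simp add: a_def)
  have K: "K \<ge> 1" "real K \<ge> 2 * M" unfolding K_def using real_nat_ceiling_ge[of "2*M"] by auto
  have b: "b > 0" using K by (simp add: b_def)
  have "a / V a 1 \<le> a + 1" by (rule V_lower[OF a])
  also have "a + 1 \<le> M" using assms unfolding a_def by (simp add: field_simps)
  finally have fa: "a / V a 1 \<le> M" .
  have "M \<le> real K / 2" using K by simp
  also have "real K / 2 = b / (2 * real K)" using K by (simp add: b_def power2_eq_square)
  also have "\<dots> \<le> b / V b 1" using V_upper[OF K(1)] V_pos[OF b, of 1] b unfolding b_def[symmetric]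
    by (intro divide_left_mono) auto
  finally have fb: "M \<le> b / V b 1" .
  have ab: "a \<le> b"
  proof -
    have "a \<le> M" using assms by (simp add: a_def)
    also have "M \<le> real K" using K assms by simp
    also have "real K \<le> b" using K by (simp add: b_def power2_eq_square)
    finally show ?thesis .
  qed
  have cont: "continuous_on {a..b} (\<lambda>\<theta>. \<theta> / V \<theta> 1)"
  proof -
    have nz: "\<forall>\<theta>\<in>{a..b}. Phi \<theta> - 1 \<noteq> 0"
    proof
      fix \<theta> assume "\<theta> \<in> {a..b}"
      then have t: "\<theta> > 0" using a by simp
      show "Phi \<theta> - 1 \<noteq> 0" using Phi_V[OF t] V_pos[OF t, of 1] by simp
    qed
    have "continuous_on {a..b} (\<lambda>\<theta>. \<theta> / (Phi \<theta> - 1))"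
      using nz by (intro continuous_on_divide continuous_on_id continuous_on_diff Phi_cont a continuous_on_const) auto
    moreover have "\<theta> \<in> {a..b} \<Longrightarrow> \<theta> / (Phi \<theta> - 1) = \<theta> / V \<theta> 1" for \<theta>
      using a Phi_V[of \<theta>] by simp
    ultimately show ?thesis by (rule continuous_on_eq) simp
  qed
  obtain \<theta> where "a \<le> \<theta>" "\<theta> \<le> b" "\<theta> / V \<theta> 1 = M"
    using IVT'[of "\<lambda>\<theta>. \<theta> / V \<theta> 1", OF fa fb ab cont] by blast
  moreover have "\<theta> > 0" using a \<open>a \<le> \<theta>\<close> by simp
  ultimately show ?thesis by blast
qed

lemma main_unique: assumes "M > (1::real)" shows "\<exists>!\<theta>::real. \<theta> > 0 \<and> Phi \<theta> = 1 + \<theta> / M"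
proof -
  have eq: "Phi \<theta> = 1 + \<theta> / M \<longleftrightarrow> \<theta> / V \<theta> 1 = M" if "\<theta> > 0" for \<theta>
    using Phi_V[OF that] V_pos[OF that, of 1] assms by (auto simp: field_simps)
  obtain \<theta> where t: "\<theta> > 0" "\<theta> / V \<theta> 1 = M" using exists_sol[OF assms] by blast
  show ?thesis
  proof (rule ex1I[of _ \<theta>])
    show "\<theta> > 0 \<and> Phi \<theta> = 1 + \<theta> / M" using t eq by simp
    fix s assume s: "s > 0 \<and> Phi s = 1 + s / M"
    then have s2: "s / V s 1 = M" using eq[of s] by auto
    show "s = \<theta>"
    proof (rule ccontr)
      assume "s \<noteq> \<theta>"
      then have "s < \<theta> \<or> \<theta> < s" by linarith
      moreover have "\<not> s < \<theta>"
      proof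
        assume "s < \<theta>" then have "s / V s 1 < \<theta> / V \<theta> 1" using s by (intro mean_smono) auto
        then show False using s2 t(2) by simp
      qed
      moreover have "\<not> \<theta> < s"
      proof
        assume "\<theta> < s" then have "\<theta> / V \<theta> 1 < s / V s 1" using t by (intro mean_smono) auto
        then show False using s2 t(2) by simp
      qed
      ultimately show False by blast
    qed
  qed
qed



lemma phi_eq: "phi \<theta> d = (if d \<ge> 1 then u \<theta> d / V \<theta> 1 else 0)" if "\<theta> > 0"
  using Phi_V[OF that] by (simp add: phi_def u_def)

lemma phi_nonneg: "\<theta> > 0 \<Longrightarrow> phi \<theta> d \<ge> 0"
  using u_pos[of \<theta> d] V_pos[of \<theta> 1] by (simp add: phi_eq less_imp_le)

lemma phi_0: "phi \<theta> 0 = 0" by (simp add: phi_def)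

lemma phi_sums: assumes t: "\<theta> > 0" shows "phi \<theta> sums 1"
proof -
  have "(\<lambda>i. u \<theta> (1 + i)) sums V \<theta> 1"
    unfolding V_def by (rule summable_sums[OF summable_u_shift[OF t]])
  then have "(\<lambda>i. u \<theta> (1 + i) / V \<theta> 1) sums (V \<theta> 1 / V \<theta> 1)" by (rule sums_divide)
  then have "(\<lambda>n. phi \<theta> (Suc n)) sums 1" using V_pos[OF t, of 1] by (simp add: phi_eq[OF t])
  then have "phi \<theta> sums (1 + phi \<theta> 0)" by (simp only: sums_Suc_iff)
  then show ?thesis by (simp add: phi_0)
qed

lemma space_phi[simp]: "space (phi_measure \<theta>) = UNIV"
  by (simp add: phi_measure_def)

lemma sets_phi[simp]: "sets (phi_measure \<theta>) = sets (count_space UNIV)"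
  by (simp add: phi_measure_def)

lemma prob_phi: assumes t: "\<theta> > 0" shows "prob_space (phi_measure \<theta>)"
proof
  have "emeasure (phi_measure \<theta>) (space (phi_measure \<theta>)) = (\<integral>\<^sup>+ x. ennreal (phi \<theta> x) * indicator UNIV x \<partial>count_space UNIV)"
    unfolding phi_measure_def by (subst emeasure_density) auto
  also have "\<dots> = (\<Sum>n. ennreal (phi \<theta> n))" by (simp add: nn_integral_count_space_nat)
  also have "\<dots> = ennreal (\<Sum>n. phi \<theta> n)"
    using phi_sums[OF t] phi_nonneg[OF t] by (intro suminf_ennreal2) (auto simp: sums_iff)
  also have "\<dots> = 1" using phi_sums[OF t] by (simp add: sums_iff)
  finally show "emeasure (phi_measure \<theta>) (space (phi_measure \<theta>)) = 1" .
qed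

lemma emeasure_phi_single: "emeasure (phi_measure \<theta>) {d} = ennreal (phi \<theta> d)"
  unfolding phi_measure_def by (subst emeasure_density) auto

lemma phi_pos: assumes t: "\<theta> > 0" "d \<ge> 1" shows "phi \<theta> d > 0"
  using u_pos[OF t(1), of d] V_pos[OF t(1), of 1] t by (simp add: phi_eq)


lemma measure_le1: assumes t: "\<theta> > 0"
  shows "measure (phi_measure \<theta>) {..1} < 1"
proof -
  interpret prob_space "phi_measure \<theta>" by (rule prob_phi[OF t])
  have "measure (phi_measure \<theta>) {2} = phi \<theta> 2"
    using emeasure_phi_single[of \<theta> 2] phi_nonneg[OF t, of 2] by (simp add: emeasure_eq_measure)
  then have p2: "measure (phi_measure \<theta>) {2} > 0" using phi_pos[OF t, of 2] by simp
  have "measure (phi_measure \<theta>) {..1} + measure (phi_measure \<theta>) {2} = measure (phi_measure \<theta>) ({..1} \<union> {2})"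
    by (rule finite_measure_Union[symmetric]) auto
  also have "\<dots> \<le> 1" by (rule prob_le_1)
  finally show ?thesis using p2 by simp
qed


lemma D0_alt: "D0 = {\<omega>. (\<forall>k. 1 \<le> \<omega> k) \<and> (\<exists>k. 2 \<le> \<omega> k)}"
proof (intro set_eqI iffI)
  fix \<omega> :: "nat \<Rightarrow> nat" assume "\<omega> \<in> D0"
  then obtain n0 where all: "\<forall>k. 1 \<le> \<omega> k" and n0: "n0 \<ge> 1" "\<forall>n\<ge>n0. dbar n \<omega> > 1"
    unfolding D0_def by blast
  have "\<exists>k. 2 \<le> \<omega> k"
  proof (rule ccontr)
    assume "\<not> (\<exists>k. 2 \<le> \<omega> k)"
    then have "\<omega> k = 1" for k using all[rule_format, of k] by (metis Suc_1 not_less_eq_eq le_antisym)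
    then have "dbar n0 \<omega> = 1" using n0 by (simp add: dbar_def)
    then show False using n0 by auto
  qed
  then show "\<omega> \<in> {\<omega>. (\<forall>k. 1 \<le> \<omega> k) \<and> (\<exists>k. 2 \<le> \<omega> k)}" using all by blast
next
  fix \<omega> :: "nat \<Rightarrow> nat" assume "\<omega> \<in> {\<omega>. (\<forall>k. 1 \<le> \<omega> k) \<and> (\<exists>k. 2 \<le> \<omega> k)}"
  then obtain k where all: "\<forall>k. 1 \<le> \<omega> k" and k: "2 \<le> \<omega> k" by blast
  have "dbar n \<omega> > 1" if n: "n \<ge> Suc k" for n
  proof -
    have kn: "k \<in> {..<n}" using n by simp
    have e: "(\<Sum>i<n. real (\<omega> i)) = real (\<omega> k) + (\<Sum>i\<in>{..<n} - {k}. real (\<omega> i))"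
      using sum.remove[OF _ kn, of "\<lambda>i. real (\<omega> i)"] by simp
    have b: "(\<Sum>i\<in>{..<n} - {k}. real (\<omega> i)) \<ge> real (card ({..<n} - {k})) * 1"
      using all by (intro sum_bounded_below) auto
    have c: "card ({..<n} - {k}) = n - 1" using kn by simp
    have k2: "real (\<omega> k) \<ge> 2" using k by simp
    have n1: "real (n - 1) = real n - 1" using kn by (simp add: of_nat_diff)
    have "(\<Sum>i<n. real (\<omega> i)) \<ge> 2 + (real n - 1)" using e b c k2 n1 by simp
    then have "(\<Sum>i<n. real (\<omega> i)) > real n" using n by linarith
    then show ?thesis using n by (simp add: dbar_def)
  qed
  then show "\<omega> \<in> D0" unfolding D0_def using all by (intro CollectI conjI exI[of _ "Suc k"]) auto
qed

lemma part1: assumes t: "\<theta> > 0" shows "emeasure (phi_inf \<theta>) D0 = 1"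
proof -
  define M where "M = (\<lambda>_::nat. phi_measure \<theta>)"
  interpret P: product_prob_space M UNIV
    unfolding product_prob_space_def product_prob_space_axioms_def product_sigma_finite_def M_def
    using prob_phi[OF t] prob_space_imp_sigma_finite by auto
  have PI: "phi_inf \<theta> = PiM UNIV M" by (simp add: phi_inf_def M_def)
  have sp: "space (PiM UNIV M) = UNIV" by (simp add: space_PiM M_def PiE_UNIV_domain)
  have coord: "{\<omega>. \<omega> k \<in> X} \<in> sets (PiM UNIV M)" for k X
  proof -
    have "(\<lambda>\<omega>. \<omega> k) -` X \<inter> space (PiM UNIV M) \<in> sets (PiM UNIV M)"
      by (rule measurable_sets[OF measurable_component_singleton]) (auto simp: M_def)
    then show ?thesis using sp by (simp add: vimage_def)
  qed
  have N1: "{\<omega>. \<forall>k. 1 \<le> \<omega> k} = (\<Inter>k. {\<omega>. \<omega> k \<in> {1..}})" by auto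
  have N2: "{\<omega>. \<exists>k. 2 \<le> \<omega> k} = (\<Union>k. {\<omega>. \<omega> k \<in> {2..}})" by auto
  have D0s: "D0 \<in> sets (PiM UNIV M)"
  proof -
    have "D0 = {\<omega>. \<forall>k. 1 \<le> \<omega> k} \<inter> {\<omega>. \<exists>k. 2 \<le> \<omega> k}" unfolding D0_alt by auto
    also have "\<dots> \<in> sets (PiM UNIV M)" unfolding N1 N2
      by (intro sets.Int sets.countable_INT sets.countable_UN image_subsetI coord) auto
    finally show ?thesis .
  qed
  have AE1: "AE \<omega> in PiM UNIV M. \<forall>k. 1 \<le> \<omega> k"
  proof (subst AE_all_countable, intro allI)
    fix k
    have "AE x in M k. 1 \<le> x"
    proof (rule AE_I'[of "{0}"])
      show "{0} \<in> null_sets (M k)"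
        using emeasure_phi_single[of \<theta> 0] by (auto simp: M_def phi_0 null_sets_def)
      show "{x \<in> space (M k). \<not> 1 \<le> x} \<subseteq> {0}" by auto
    qed
    then show "AE \<omega> in PiM UNIV M. 1 \<le> \<omega> k" by (rule P.AE_component[rotated]) simp
  qed
  interpret Q: prob_space "phi_measure \<theta>" by (rule prob_phi[OF t])
  define q where "q = measure (phi_measure \<theta>) {..1}"
  have q: "0 \<le> q" "q < 1" using measure_le1[OF t] by (auto simp: q_def)
  define N where "N = {\<omega>::nat\<Rightarrow>nat. \<forall>k. \<omega> k \<in> {..1}}"
  have Ns: "N \<in> sets (PiM UNIV M)"
  proof -
    have "N = (\<Inter>k. {\<omega>. \<omega> k \<in> {..1}})" unfolding N_def by auto
    also have "\<dots> \<in> sets (PiM UNIV M)" by (intro sets.countable_INT image_subsetI coord) auto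
    finally show ?thesis .
  qed
  have Nle: "emeasure (PiM UNIV M) N \<le> ennreal (q ^ n)" for n
  proof -
    have sub: "N \<subseteq> prod_emb UNIV M {..<n} (PiE {..<n} (\<lambda>_. {..1}))"
    proof
      fix \<omega> assume "\<omega> \<in> N"
      then show "\<omega> \<in> prod_emb UNIV M {..<n} (PiE {..<n} (\<lambda>_. {..1}))"
        unfolding prod_emb_iff N_def by (simp add: restrict_PiE_iff extensional_def M_def)
    qed
    have "emeasure (PiM UNIV M) N \<le> emeasure (PiM UNIV M) (prod_emb UNIV M {..<n} (PiE {..<n} (\<lambda>_. {..1})))"
      by (rule emeasure_mono[OF sub], rule measurable_prod_emb, simp, rule sets_PiM_I_finite) (auto simp: M_def)
    also have "\<dots> = (\<Prod>i<n. emeasure (M i) {..1})"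
      by (rule P.emeasure_PiM_emb) (auto simp: M_def)
    also have "\<dots> = (\<Prod>i<n. ennreal q)"
      using Q.emeasure_eq_measure by (simp add: M_def q_def)
    also have "\<dots> = ennreal (q ^ n)" using q by (simp add: ennreal_power)
    finally show ?thesis .
  qed
  have "emeasure (PiM UNIV M) N \<le> 0"
  proof (rule LIMSEQ_le_const[of "\<lambda>n. ennreal (q ^ n)"])
    show "(\<lambda>n. ennreal (q ^ n)) \<longlonglongrightarrow> 0"
      using LIMSEQ_power_zero[of q] q by (simp add: tendsto_ennrealI[of _ 0, simplified])
    show "\<exists>N0. \<forall>n\<ge>N0. emeasure (PiM UNIV M) N \<le> ennreal (q ^ n)" using Nle by blast
  qed
  then have Nnull: "N \<in> null_sets (PiM UNIV M)" using Ns by (auto simp: null_sets_def)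
  have AE2: "AE \<omega> in PiM UNIV M. \<exists>k. 2 \<le> \<omega> k"
  proof (rule AE_I'[OF Nnull], safe)
    fix x assume "x \<in> space (PiM UNIV M)" "\<not> (\<exists>k. 2 \<le> x k)"
    then have "x k \<le> 1" for k by (metis not_less_eq_eq numeral_2_eq_2 One_nat_def)
    then show "x \<in> N" by (simp add: N_def)
  qed
  have "AE \<omega> in PiM UNIV M. \<omega> \<in> D0" using AE1 AE2 unfolding D0_alt by eventually_elim auto
  then show ?thesis unfolding PI by (rule P.emeasure_eq_1_AE[OF D0s])
qed


theorem mainTheorem7:
  fixes \<theta>0 :: real
  assumes "\<theta>0 > 0"
  shows "emeasure (phi_inf \<theta>0) D0 = 1
    \<and> (\<forall>\<omega>\<in>D0. \<forall>n0::nat. (n0 \<ge> 1 \<and> (\<forall>n\<ge>n0. dbar n \<omega> > 1)) \<longrightarrow>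
          (\<forall>n\<ge>n0. \<exists>!\<theta>::real. \<theta> > 0 \<and> Phi \<theta> = 1 + \<theta> / dbar n \<omega>))"
proof (intro conjI ballI allI impI)
  show "emeasure (phi_inf \<theta>0) D0 = 1" by (rule part1[OF assms])
next
  fix \<omega> :: "nat \<Rightarrow> nat" and n0 n :: nat
  assume "n0 \<ge> 1 \<and> (\<forall>n\<ge>n0. dbar n \<omega> > 1)" "n0 \<le> n"
  then have "dbar n \<omega> > 1" by blast
  then show "\<exists>!\<theta>::real. \<theta> > 0 \<and> Phi \<theta> = 1 + \<theta> / dbar n \<omega>" by (rule main_unique)
qed

end
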